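(* Let $a,b,k$ be positive integers. Define $a_1=a$, $a_2=b$, and $a_n=ka_{n-1}+a_{n-2}$ for $n\ge 3$. Let $(x_n)_{n\ge1}$ be the sequence $1,1,1,2,2,2,1,1,1,2,2,2,\ldots$ and $(y_n)_{n\ge1}$ the sequence $2,2,2,1,1,1,2,2,2,1,1,1,\ldots$ (blocks of three, alternating). (1) If $k$ is even, then the sequence $(\Gamma(a_n,a_{n+1}))_{n\ge1}$ is constant. (2) If $k$ is odd: (a) if $a$ and $b$ are both odd, then $(\Gamma(a_n,a_{n+1}))_{n\ge 3}$ equals $(x_n)_{n\ge1}$ or $(y_n)_{n\ge1}$; (b) if $a$ is odd and $b$ is even, then $(\Gamma(a_n,a_{n+1}))_{n\ge 2}$ equals $(x_n)_{n\ge1}$ or $(y_n)_{n\ge1}$; (c) if $a$ is even and $b$ is odd, then $(\Gamma(a_n,a_{n+1}))_{n\ge 1}$ equals $(x_n)_{n\ge1}$ or $(y_n)_{n\ge1}$.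
   Context: For relatively prime positive integers $p,q$, exactly one of the equations $px+qy=\frac{(p-1)(q-1)}{2}$ (Equation 1) and $px+qy+1=\frac{(p-1)(q-1)}{2}$ (Equation 2) has a solution in nonnegative integers $(x,y)$. For positive integers $a,b$ with $d=\gcd(a,b)$, $\Gamma(a,b)=1$ if Equation 1 with $(p,q)=(a/d,b/d)$ has a nonnegative integer solution, and $\Gamma(a,b)=2$ otherwise. A sequence indexed from $n\ge m$ "equals" $(x_n)_{n\ge1}$ means its $j$-th term (the one with index $n=m+j-1$) equals $x_j$ for all $j\ge1$. *)

theory Defs
  imports Main
begin

text \<open>Equation 1 for coprime p q: p x + q y = (p-1)(q-1)/2 with x, y nonnegative integers.
  We write it multiplied by 2 to avoid division (the right side is an integer for coprime p q).\<close>
definition eq1_solvable :: "nat \<Rightarrow> nat \<Rightarrow> bool" where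
  "eq1_solvable p q \<longleftrightarrow>
     (\<exists>x y :: nat. 2 * (int p * int x + int q * int y) = (int p - 1) * (int q - 1))"

definition Gamma :: "nat \<Rightarrow> nat \<Rightarrow> nat" where
  "Gamma a b = (let d = gcd a b in if eq1_solvable (a div d) (b div d) then 1 else 2)"

text \<open>The sequence a_1 = a, a_2 = b, a_n = k a_{n-1} + a_{n-2} (n >= 3), indexed literally
  from 1; the value at index 0 is an irrelevant dummy.\<close>
fun recseq :: "nat \<Rightarrow> nat \<Rightarrow> nat \<Rightarrow> nat \<Rightarrow> nat" where
  "recseq a b k 0 = 0"
| "recseq a b k (Suc 0) = a"
| "recseq a b k (Suc (Suc 0)) = b"
| "recseq a b k (Suc (Suc (Suc n))) = k * recseq a b k (Suc (Suc n)) + recseq a b k (Suc n)"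

definition xseq :: "nat \<Rightarrow> nat" where
  "xseq j = (if (j - 1) mod 6 < 3 then 1 else 2)"

definition yseq :: "nat \<Rightarrow> nat" where
  "yseq j = (if (j - 1) mod 6 < 3 then 2 else 1)"

end

theory Submission imports Defs begin

definition S :: "int \<Rightarrow> int \<Rightarrow> bool" where
  "S p q \<longleftrightarrow> (\<exists>u v. u > 0 \<and> v > 0 \<and> odd u \<and> odd v \<and> q*u + p*v = p*q+1)"

lemma eq1_S: "eq1_solvable p q \<longleftrightarrow> S (int p) (int q)"
proof
  assume "eq1_solvable p q"
  then obtain x y :: nat where h: "2 * (int p * int x + int q * int y) = (int p - 1) * (int q - 1)"
    unfolding eq1_solvable_def by blast
  show "S (int p) (int q)" unfolding S_def
    by (rule exI[of _ "2*int y+1"], rule exI[of _ "2*int x+1"]) (use h in \<open>auto simp: algebra_simps\<close>)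
next
  assume "S (int p) (int q)"
  then obtain u v where h: "u > 0" "v > 0" "odd u" "odd v" "int q*u + int p*v = int p*int q+1"
    unfolding S_def by blast
  obtain y where y: "u = 2*y+1" using h(3) oddE by blast
  obtain x where x: "v = 2*x+1" using h(4) oddE by blast
  have "2 * (int p * int (nat x) + int q * int (nat y)) = (int p - 1) * (int q - 1)"
    using h y x by (auto simp: algebra_simps)
  then show "eq1_solvable p q" unfolding eq1_solvable_def by blast
qed

lemma S_sym: "S p q = S q p"
  unfolding S_def by (auto simp: algebra_simps) (metis add.commute mult.commute)+

lemma S_odd:
  assumes "p > 0" "q > 0" "odd p"
  shows "S p (q+p) \<longleftrightarrow> S p q"
proof
  assume "S p (q+p)"
  then obtain u v where h: "u > 0" "v > 0" "odd u" "odd v" "(q+p)*u + p*v = p*(q+p)+1"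
    unfolding S_def by blast
  have e: "q*u + p*(v+u-p) = p*q+1" using h(5) by (simp add: algebra_simps)
  have "v + u - p > 0"
  proof (rule ccontr)
    assume "\<not> ?thesis"
    then have "v+u-p \<le> 0" by simp
    then have "u \<le> p - v" by simp
    moreover have "q*u \<ge> p*q + 1" using e \<open>v+u-p \<le> 0\<close> assms
      by (smt (verit) mult_nonneg_nonpos)
    ultimately show False using assms h
      by (smt (verit, ccfv_threshold) mult_left_mono mult.commute)
  qed
  moreover have "odd (v+u-p)" using h assms by simp
  ultimately show "S p q" unfolding S_def using h e by blast
next
  assume "S p q"
  then obtain u v where h: "u > 0" "v > 0" "odd u" "odd v" "q*u + p*v = p*q+1"
    unfolding S_def by blast
  have "u \<le> p"
  proof (rule ccontr)
    assume "\<not> u \<le> p"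
    then have "u \<ge> p + 1" by simp
    then have "q*u \<ge> q*(p+1)" using assms by (simp add: mult_left_mono)
    moreover have "p*v \<ge> p" using h assms by simp
    moreover have "q*(p+1) = p*q + q" by (simp add: algebra_simps)
    ultimately show False using h(5) assms by linarith
  qed
  then have "v - u + p > 0" using h by simp
  moreover have "odd (v-u+p)" using h assms by simp
  moreover have "(q+p)*u + p*(v-u+p) = p*(q+p)+1" using h(5) by (simp add: algebra_simps)
  ultimately show "S p (q+p)" unfolding S_def using h by blast
qed

lemma S_even:
  assumes "p > 0" "q > 0" "even p" "coprime p q"
  shows "S p (q+p) \<longleftrightarrow> \<not> S p q"
proof
  have p2: "p \<ge> 2" using assms by presburger
  assume "S p (q+p)"
  then obtain u' v' where h': "u' > 0" "v' > 0" "odd u'" "odd v'" "(q+p)*u' + p*v' = p*(q+p)+1"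
    unfolding S_def by blast
  show "\<not> S p q"
  proof
    assume "S p q"
    then obtain u v where h: "u > 0" "v > 0" "odd u" "odd v" "q*u + p*v = p*q+1"
      unfolding S_def by blast
    have "u < p"
    proof (rule ccontr)
      assume "\<not> u < p"
      then have "q*u \<ge> q*p" using assms by (simp add: mult_left_mono)
      moreover have "p*v \<ge> p" using h assms by simp
      ultimately show False using h(5) p2 by (simp add: mult.commute)
    qed
    have "u' < p"
    proof (rule ccontr)
      assume "\<not> u' < p"
      then have "(q+p)*u' \<ge> (q+p)*p" using assms by (simp add: mult_left_mono)
      moreover have "p*v' \<ge> p" using h' assms by simp
      moreover have "(q+p)*p = p*(q+p)" by simp
      ultimately show False using h'(5) p2 by linarith
    qed
    have "q*(u-u') = p*(v'+u'-p-v)" using h(5) h'(5) by (simp add: algebra_simps)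
    then have "p dvd q*(u-u')" by simp
    then have "p dvd (u-u')" using assms(4) coprime_dvd_mult_right_iff by blast
    moreover have "\<bar>u-u'\<bar> < p" using \<open>u<p\<close> \<open>u'<p\<close> h h' by simp
    ultimately have "u - u' = 0"
      by (metis abs_of_pos assms(1) dvd_imp_le_int linorder_not_le)
    then have "u = u'" by simp
    then have "p*v = p*(v'+u-p)" using h(5) h'(5) by (simp add: algebra_simps)
    then have "v = v'+u-p" using assms(1) by simp
    moreover have "even (v'+u-p)" using h(3) h'(4) assms(3) by simp
    ultimately show False using h(4) by simp
  qed
next
  have p2: "p \<ge> 2" using assms by presburger
  assume ns: "\<not> S p q"
  obtain s t where st: "s*q + t*p = 1" using bezout_int[of q p] assms(4)
    by (metis coprime_commute coprime_iff_gcd_eq_1)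
  define u0 where "u0 = s mod p"
  have u0r: "0 \<le> u0" "u0 < p" using assms unfolding u0_def by auto
  have u0e: "u0 = s - (s div p)*p" unfolding u0_def using div_mult_mod_eq[of s p] by linarith
  have "q*(s - (s div p)*p) + p*(t + q*(s div p)) = s*q + t*p" by (simp add: algebra_simps)
  then have "q*u0 + p*(t + q*(s div p)) = 1" using st u0e by simp
  then obtain w where w: "q*u0 + p*w = 1" by blast
  define v0 where "v0 = q + w"
  have "p*v0 = p*q + p*w" unfolding v0_def by (simp add: distrib_left)
  then have v0: "q*u0 + p*v0 = p*q+1" using w by linarith
  have "u0 \<noteq> 0"
  proof
    assume "u0 = 0"
    then have "p * (v0 - q) = 1" using v0 by (simp add: algebra_simps)
    then have "p dvd 1" by (metis dvd_triv_left)
    then show False using p2 by simp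
  qed
  have "q*u0 \<le> q*(p-1)" using u0r assms by (simp add: mult_left_mono)
  moreover have "q*(p-1) = p*q - q" by (simp add: algebra_simps)
  ultimately have "p*v0 > 0" using v0 assms by linarith
  then have "v0 > 0" using assms by (simp add: zero_less_mult_iff)
  have "odd (q*u0)"
  proof
    assume "even (q*u0)"
    then have "even (q*u0 + p*v0)" using assms by simp
    then show False using v0 assms by simp
  qed
  then have "odd u0" by simp
  show "S p (q+p)"
  proof (cases "odd v0")
    case True
    have "u0 > 0" using \<open>u0 \<noteq> 0\<close> u0r by simp
    then have "S p q" unfolding S_def using v0 \<open>v0 > 0\<close> \<open>odd u0\<close> True by blast
    then show ?thesis using ns by blast
  next
    case False
    have "(q+p)*u0 + p*(v0-u0+p) = p*(q+p)+1" using v0 by (simp add: algebra_simps)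
    moreover have "v0-u0+p > 0" using \<open>v0>0\<close> u0r by simp
    moreover have "odd (v0-u0+p)" using False \<open>odd u0\<close> assms by simp
    moreover have "u0 > 0" using \<open>u0 \<noteq> 0\<close> u0r by simp
    ultimately show ?thesis unfolding S_def using \<open>odd u0\<close> by blast
  qed
qed

lemma Gamma_S: "Gamma a b = (if S (int (a div gcd a b)) (int (b div gcd a b)) then 1 else 2)"
  unfolding Gamma_def Let_def eq1_S by simp

lemma Gamma_sym: "Gamma a b = Gamma b a"
  unfolding Gamma_S using S_sym by (simp add: gcd.commute)

lemma Gamma_12: "Gamma a b = 1 \<or> Gamma a b = 2"
  unfolding Gamma_def Let_def by simp

lemma Gamma_step:
  assumes "a > 0" "b > 0"
  shows "Gamma a (b+a) = (if odd (a div gcd a b) then Gamma a b else 3 - Gamma a b)"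
proof -
  define d where "d = gcd a b"
  have d0: "d > 0" using assms unfolding d_def by simp
  have g: "gcd a (b+a) = d" unfolding d_def by (simp add: add.commute)
  have "d dvd a" "d dvd b" unfolding d_def by auto
  then have e: "(b+a) div d = b div d + a div d" by (simp add: div_add)
  define p where "p = a div d"
  define q where "q = b div d"
  have p0: "p > 0" using assms \<open>d dvd a\<close> d0 unfolding p_def
    by (metis dvd_div_eq_0_iff gr0I not_gr0)
  have q0: "q > 0" using assms \<open>d dvd b\<close> d0 unfolding q_def
    by (metis dvd_div_eq_0_iff gr0I not_gr0)
  have cop: "coprime p q" unfolding p_def q_def d_def using assms div_gcd_coprime by blast
  have G1: "Gamma a b = (if S (int p) (int q) then 1 else 2)"
    unfolding Gamma_S p_def q_def d_def ..
  have G2: "Gamma a (b+a) = (if S (int p) (int q + int p) then 1 else 2)"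
    unfolding Gamma_S g e p_def q_def by simp
  show ?thesis
  proof (cases "odd p")
    case True
    then have "S (int p) (int q + int p) = S (int p) (int q)"
      using S_odd[of "int p" "int q"] p0 q0 by simp
    then show ?thesis using G1 G2 True unfolding p_def d_def by simp
  next
    case False
    then have "S (int p) (int q + int p) = (\<not> S (int p) (int q))"
      using S_even[of "int p" "int q"] p0 q0 cop by simp
    then show ?thesis using G1 G2 False unfolding p_def d_def by simp
  qed
qed

lemma Gamma_mult:
  assumes "a > 0" "b > 0"
  shows "Gamma a (b + m*a) = (if odd (a div gcd a b) \<or> even m then Gamma a b else 3 - Gamma a b)"
proof (induction m)
  case 0
  then show ?case by simp
next
  case (Suc m)
  have "Gamma a (b + Suc m * a) = Gamma a ((b + m*a) + a)" by (simp add: algebra_simps)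
  also have "\<dots> = (if odd (a div gcd a (b + m*a)) then Gamma a (b+m*a) else 3 - Gamma a (b+m*a))"
    using Gamma_step[of a "b+m*a"] assms by simp
  also have "gcd a (b + m*a) = gcd a b" using gcd_add_mult[of a m b] by (simp add: add.commute)
  finally show ?case using Suc.IH Gamma_12[of a b] by auto
qed

lemma final_pattern:
  assumes h: "\<And>n. h (Suc n) = (if n mod 3 = 2 then 3 - h n else h n)" and h0: "h 0 = 1 \<or> h 0 = 2"
  shows "(\<forall>j\<ge>1. h (j-1) = xseq j) \<or> (\<forall>j\<ge>1. h (j-1) = yseq j)"
proof -
  have c: "h n = (if n mod 6 < 3 then h 0 else 3 - h 0)" for n
  proof (induction n)
    case 0 then show ?case by simp
  next
    case (Suc n)
    have B: "(n mod 3 = 2) = (n mod 6 = 2 \<or> n mod 6 = 5)" by presburger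
    have h0le: "h 0 \<le> 3" using h0 by auto
    consider "n mod 6 = 2" | "n mod 6 = 5" | "n mod 6 \<noteq> 2 \<and> n mod 6 \<noteq> 5" by blast
    then show ?case
    proof cases
      case 1
      then have "Suc n mod 6 = 3" by presburger
      then show ?thesis using 1 B h[of n] Suc.IH by simp
    next
      case 2
      then have "Suc n mod 6 = 0" by presburger
      then show ?thesis using 2 B h[of n] Suc.IH h0le by simp
    next
      case 3
      then have "(Suc n mod 6 < 3) = (n mod 6 < 3)" by presburger
      then show ?thesis using 3 B h[of n] Suc.IH by simp
    qed
  qed
  show ?thesis
  proof (cases "h 0 = 1")
    case True
    have "\<forall>j\<ge>1. h (j-1) = xseq j"
    proof (intro allI impI)
      fix j :: nat
      show "h (j-1) = xseq j" unfolding xseq_def using c[of "j-1"] True by simp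
    qed
    then show ?thesis by blast
  next
    case False
    then have "h 0 = 2" using h0 by simp
    have "\<forall>j\<ge>1. h (j-1) = yseq j"
    proof (intro allI impI)
      fix j :: nat
      show "h (j-1) = yseq j" unfolding yseq_def using c[of "j-1"] \<open>h 0 = 2\<close> by simp
    qed
    then show ?thesis by blast
  qed
qed

lemma rec_pos2: "a > 0 \<Longrightarrow> b > 0 \<Longrightarrow> recseq a b k (Suc n) > 0 \<and> recseq a b k (Suc (Suc n)) > 0"
  by (induction n) auto

lemma rec_pos: "a > 0 \<Longrightarrow> b > 0 \<Longrightarrow> recseq a b k (Suc n) > 0"
  using rec_pos2 by blast

lemma rec_gcd: "gcd (recseq a b k (Suc n)) (recseq a b k (Suc (Suc n))) = gcd a b"
proof (induction n)
  case 0 then show ?case by simp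
next
  case (Suc n)
  have "gcd (recseq a b k (Suc (Suc n))) (recseq a b k (Suc (Suc (Suc n))))
      = gcd (recseq a b k (Suc (Suc n))) (k * recseq a b k (Suc (Suc n)) + recseq a b k (Suc n))"
    by simp
  also have "\<dots> = gcd (recseq a b k (Suc (Suc n))) (recseq a b k (Suc n))" by (rule gcd_add_mult)
  finally show ?case using Suc.IH by (simp add: gcd.commute)
qed

lemma rec_par:
  assumes "odd k"
  shows "even (recseq a b k (Suc n)) = even (recseq a b k (Suc (n mod 3)))"
proof (induction n rule: less_induct)
  case (less n)
  show ?case
  proof (cases "n < 3")
    case True then show ?thesis by simp
  next
    case False
    define m where "m = n - 3"
    have m: "n = Suc (Suc (Suc m))" using False unfolding m_def by simp
    have "even (recseq a b k (Suc n)) = even (recseq a b k (Suc m))"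
      using assms unfolding m by (simp; argo)
    also have "\<dots> = even (recseq a b k (Suc (m mod 3)))" using less[of m] m by simp
    also have "m mod 3 = n mod 3" using m by simp
    finally show ?thesis .
  qed
qed

lemma g_step:
  assumes "a > 0" "b > 0"
  shows "Gamma (recseq a b k (Suc (Suc n))) (recseq a b k (Suc (Suc (Suc n)))) =
    (if odd (recseq a b k (Suc (Suc n)) div gcd a b) \<or> even k
     then Gamma (recseq a b k (Suc n)) (recseq a b k (Suc (Suc n)))
     else 3 - Gamma (recseq a b k (Suc n)) (recseq a b k (Suc (Suc n))))"
proof -
  let ?x = "recseq a b k (Suc (Suc n))" and ?y = "recseq a b k (Suc n)"
  have "Gamma ?x (recseq a b k (Suc (Suc (Suc n)))) = Gamma ?x (?y + k * ?x)" by (simp add: add.commute)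
  also have "\<dots> = (if odd (?x div gcd ?x ?y) \<or> even k then Gamma ?x ?y else 3 - Gamma ?x ?y)"
    using Gamma_mult[OF rec_pos[OF assms, of k "Suc n"] rec_pos[OF assms, of k n]] by blast
  also have "gcd ?x ?y = gcd a b" using rec_gcd[of a b k n] by (simp add: gcd.commute)
  finally show ?thesis by (simp add: Gamma_sym[of ?x ?y])
qed

lemma odd_div_iff:
  fixes x D :: nat
  assumes "odd D" "D dvd x"
  shows "odd (x div D) \<longleftrightarrow> odd x"
proof -
  have "x = D * (x div D)" using assms by simp
  then show ?thesis using assms(1) by (metis even_mult_iff)
qed

lemma odd_case:
  assumes pos: "a > 0" "b > 0" and k: "odd k" and D: "odd (gcd a b)"
    and par: "\<And>n. odd (recseq a b k (Suc (Suc (n+s)))) \<longleftrightarrow> n mod 3 \<noteq> 2"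
  shows "(\<forall>j\<ge>1. Gamma (recseq a b k (s+1+j-1)) (recseq a b k (s+1+j)) = xseq j)
       \<or> (\<forall>j\<ge>1. Gamma (recseq a b k (s+1+j-1)) (recseq a b k (s+1+j)) = yseq j)"
proof -
  define h where "h n = Gamma (recseq a b k (Suc (n+s))) (recseq a b k (Suc (Suc (n+s))))" for n
  have hs: "h (Suc n) = (if n mod 3 = 2 then 3 - h n else h n)" for n
  proof -
    have dv: "gcd a b dvd recseq a b k (Suc (Suc (n+s)))"
      using rec_gcd[of a b k "Suc (n+s)"] by (metis gcd_dvd1)
    have "h (Suc n) = (if odd (recseq a b k (Suc (Suc (n+s))) div gcd a b) \<or> even k
         then h n else 3 - h n)"
      unfolding h_def using g_step[OF pos, of k "n+s"] by simp
    also have "odd (recseq a b k (Suc (Suc (n+s))) div gcd a b) \<longleftrightarrow> n mod 3 \<noteq> 2"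
      using odd_div_iff[OF D dv] par[of n] by simp
    finally show ?thesis using k by auto
  qed
  have h0: "h 0 = 1 \<or> h 0 = 2" unfolding h_def by (rule Gamma_12)
  have F: "(\<forall>j\<ge>1. h (j-1) = xseq j) \<or> (\<forall>j\<ge>1. h (j-1) = yseq j)"
    by (rule final_pattern[OF hs h0])
  have E: "h (j-1) = Gamma (recseq a b k (s+1+j-1)) (recseq a b k (s+1+j))" if "j \<ge> 1" for j
  proof -
    have "s+1+j-1 = Suc (j-1+s)" "s+1+j = Suc (Suc (j-1+s))" using that by auto
    then show ?thesis unfolding h_def by (simp add: add.commute)
  qed
  show ?thesis using F E by auto
qed

theorem corollary5p3:
  fixes a b k :: nat
  assumes "a > 0" and "b > 0" and "k > 0"
  shows "(even k \<longrightarrow>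
            (\<exists>c. \<forall>n\<ge>1. Gamma (recseq a b k n) (recseq a b k (n + 1)) = c))
       \<and> (odd k \<longrightarrow>
            (odd a \<and> odd b \<longrightarrow>
               (\<forall>j\<ge>1. Gamma (recseq a b k (3 + j - 1)) (recseq a b k (3 + j)) = xseq j)
             \<or> (\<forall>j\<ge>1. Gamma (recseq a b k (3 + j - 1)) (recseq a b k (3 + j)) = yseq j))
          \<and> (odd a \<and> even b \<longrightarrow>
               (\<forall>j\<ge>1. Gamma (recseq a b k (2 + j - 1)) (recseq a b k (2 + j)) = xseq j)
             \<or> (\<forall>j\<ge>1. Gamma (recseq a b k (2 + j - 1)) (recseq a b k (2 + j)) = yseq j))
          \<and> (even a \<and> odd b \<longrightarrow>
               (\<forall>j\<ge>1. Gamma (recseq a b k (1 + j - 1)) (recseq a b k (1 + j)) = xseq j)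
             \<or> (\<forall>j\<ge>1. Gamma (recseq a b k (1 + j - 1)) (recseq a b k (1 + j)) = yseq j)))"
proof -
  have rp: "recseq a b k 1 = a" "recseq a b k 2 = b" "recseq a b k 3 = k*b + a"
    by (simp_all add: numeral_eq_Suc)
  have E: "\<exists>c. \<forall>n\<ge>1. Gamma (recseq a b k n) (recseq a b k (n + 1)) = c" if ek: "even k"
  proof -
    define g where "g n = Gamma (recseq a b k (Suc n)) (recseq a b k (Suc (Suc n)))" for n
    have "g (Suc n) = g n" for n unfolding g_def using g_step[OF assms(1,2), of k n] ek by simp
    then have gc: "g n = g 0" for n by (induction n) auto
    show ?thesis
    proof (intro exI allI impI)
      fix n :: nat assume "n \<ge> 1"
      then obtain m where m: "n = Suc m" by (cases n) auto
      show "Gamma (recseq a b k n) (recseq a b k (n + 1)) = g 0"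
        using gc[of m] unfolding g_def m by simp
    qed
  qed
  have pa: "even (recseq a b k (Suc m)) = (if m mod 3 = 0 then even a else if m mod 3 = 1 then even b else even (k*b+a))"
    if k: "odd k" for m
  proof -
    have X: "even (recseq a b k (Suc m)) = even (recseq a b k (Suc (m mod 3)))" using rec_par[OF k] by blast
    consider "m mod 3 = 0" | "m mod 3 = 1" | "m mod 3 = 2" by linarith
    then show ?thesis
    proof cases
      case 1 then show ?thesis using X by simp
    next
      case 2
      have "Suc (m mod 3) = Suc (Suc 0)" using 2 by simp
      then have "even (recseq a b k (Suc m)) = even b" using X by simp
      then show ?thesis using 2 by simp
    next
      case 3
      have "Suc (m mod 3) = Suc (Suc (Suc 0))" using 3 by simp
      then have "even (recseq a b k (Suc m)) = even (k*b+a)" using X by simp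
      then show ?thesis using 3 by simp
    qed
  qed
  have O: "odd k \<Longrightarrow> (odd a \<and> odd b \<longrightarrow>
               (\<forall>j\<ge>1. Gamma (recseq a b k (3 + j - 1)) (recseq a b k (3 + j)) = xseq j)
             \<or> (\<forall>j\<ge>1. Gamma (recseq a b k (3 + j - 1)) (recseq a b k (3 + j)) = yseq j))
          \<and> (odd a \<and> even b \<longrightarrow>
               (\<forall>j\<ge>1. Gamma (recseq a b k (2 + j - 1)) (recseq a b k (2 + j)) = xseq j)
             \<or> (\<forall>j\<ge>1. Gamma (recseq a b k (2 + j - 1)) (recseq a b k (2 + j)) = yseq j))
          \<and> (even a \<and> odd b \<longrightarrow>
               (\<forall>j\<ge>1. Gamma (recseq a b k (1 + j - 1)) (recseq a b k (1 + j)) = xseq j)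
             \<or> (\<forall>j\<ge>1. Gamma (recseq a b k (1 + j - 1)) (recseq a b k (1 + j)) = yseq j))"
  proof (intro conjI impI)
    assume k: "odd k"
    {
      assume ab: "odd a \<and> odd b"
      have D: "odd (gcd a b)" using ab by (metis dvd_trans gcd_dvd1)
      have par: "odd (recseq a b k (Suc (Suc (n+2)))) \<longleftrightarrow> n mod 3 \<noteq> 2" for n
      proof -
        consider "n mod 3 = 0" | "n mod 3 = 1" | "n mod 3 = 2" by linarith
        then show ?thesis
        proof cases
          case 1 then have "Suc (n+2) mod 3 = 0" by presburger
          then show ?thesis using pa[OF k, of "Suc (n+2)"] 1 ab k by (simp del: recseq.simps)
        next
          case 2 then have "Suc (n+2) mod 3 = 1" by presburger
          then show ?thesis using pa[OF k, of "Suc (n+2)"] 2 ab k by (simp del: recseq.simps)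
        next
          case 3 then have "Suc (n+2) mod 3 = 2" by presburger
          then show ?thesis using pa[OF k, of "Suc (n+2)"] 3 ab k by (simp del: recseq.simps)
        qed
      qed
      have "(\<forall>j\<ge>1. Gamma (recseq a b k (2+1+j-1)) (recseq a b k (2+1+j)) = xseq j)
       \<or> (\<forall>j\<ge>1. Gamma (recseq a b k (2+1+j-1)) (recseq a b k (2+1+j)) = yseq j)"
        by (rule odd_case[OF assms(1,2) k D par])
      then show "(\<forall>j\<ge>1. Gamma (recseq a b k (3 + j - 1)) (recseq a b k (3 + j)) = xseq j)
             \<or> (\<forall>j\<ge>1. Gamma (recseq a b k (3 + j - 1)) (recseq a b k (3 + j)) = yseq j)" by simp
    }
    {
      assume ab: "odd a \<and> even b"
      have D: "odd (gcd a b)" using ab by (metis dvd_trans gcd_dvd1)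
      have par: "odd (recseq a b k (Suc (Suc (n+1)))) \<longleftrightarrow> n mod 3 \<noteq> 2" for n
      proof -
        consider "n mod 3 = 0" | "n mod 3 = 1" | "n mod 3 = 2" by linarith
        then show ?thesis
        proof cases
          case 1 then have "Suc (n+1) mod 3 = 2" by presburger
          then show ?thesis using pa[OF k, of "Suc (n+1)"] 1 ab k by (simp del: recseq.simps)
        next
          case 2 then have "Suc (n+1) mod 3 = 0" by presburger
          then show ?thesis using pa[OF k, of "Suc (n+1)"] 2 ab k by (simp del: recseq.simps)
        next
          case 3 then have "Suc (n+1) mod 3 = 1" by presburger
          then show ?thesis using pa[OF k, of "Suc (n+1)"] 3 ab k by (simp del: recseq.simps)
        qed
      qed
      have "(\<forall>j\<ge>1. Gamma (recseq a b k (1+1+j-1)) (recseq a b k (1+1+j)) = xseq j)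
       \<or> (\<forall>j\<ge>1. Gamma (recseq a b k (1+1+j-1)) (recseq a b k (1+1+j)) = yseq j)"
        by (rule odd_case[OF assms(1,2) k D par])
      then show "(\<forall>j\<ge>1. Gamma (recseq a b k (2 + j - 1)) (recseq a b k (2 + j)) = xseq j)
             \<or> (\<forall>j\<ge>1. Gamma (recseq a b k (2 + j - 1)) (recseq a b k (2 + j)) = yseq j)" by simp
    }
    {
      assume ab: "even a \<and> odd b"
      have D: "odd (gcd a b)" using ab by (metis dvd_trans gcd_dvd2)
      have par: "odd (recseq a b k (Suc (Suc (n+0)))) \<longleftrightarrow> n mod 3 \<noteq> 2" for n
      proof -
        consider "n mod 3 = 0" | "n mod 3 = 1" | "n mod 3 = 2" by linarith
        then show ?thesis
        proof cases
          case 1 then have "Suc (n+0) mod 3 = 1" by presburger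
          then show ?thesis using pa[OF k, of "Suc (n+0)"] 1 ab k by (simp del: recseq.simps)
        next
          case 2 then have "Suc (n+0) mod 3 = 2" by presburger
          then show ?thesis using pa[OF k, of "Suc (n+0)"] 2 ab k by (simp del: recseq.simps)
        next
          case 3 then have "Suc (n+0) mod 3 = 0" by presburger
          then show ?thesis using pa[OF k, of "Suc (n+0)"] 3 ab k by (simp del: recseq.simps)
        qed
      qed
      have "(\<forall>j\<ge>1. Gamma (recseq a b k (0+1+j-1)) (recseq a b k (0+1+j)) = xseq j)
       \<or> (\<forall>j\<ge>1. Gamma (recseq a b k (0+1+j-1)) (recseq a b k (0+1+j)) = yseq j)"
        by (rule odd_case[OF assms(1,2) k D par])
      then show "(\<forall>j\<ge>1. Gamma (recseq a b k (1 + j - 1)) (recseq a b k (1 + j)) = xseq j)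
             \<or> (\<forall>j\<ge>1. Gamma (recseq a b k (1 + j - 1)) (recseq a b k (1 + j)) = yseq j)" by simp
    }
  qed
  show ?thesis using E O by blast
qed

end
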